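(* Let $G$ be a reaction network with one-dimensional stoichiometric subspace, $c^*$ a total-constant vector, and $q,\ell,\phi$ as below. If for a rate-constant vector $\kappa^*$, $x_1^*$ is a simple solution or a multiplicity-$(2N+1)$ solution ($N\in\mathbb Z_{>0}$) of $q(\kappa^*;x_1)=0$ and $\phi(\hat\kappa;x_1)$ is well-defined at $x_1^*$, then for every $\epsilon>0$ there exists $\delta\in\mathbb R$ such that for all $\delta'\in(0,|\delta|)$: (1) for $\kappa=(\kappa^*_1,\dots,\kappa^*_{\ell-1},\kappa^*_\ell+\mathrm{sign}(\delta)\delta',\kappa^*_{\ell+1},\dots,\kappa^*_m)$, the equation $q(\kappa;x_1)=0$ has a simple real solution $x_1^{(1)}$ with $0<x_1^{(1)}-x_1^*<\epsilon$; (2) for $\kappa=(\kappa^*_1,\dots,\kappa^*_{\ell-1},\kappa^*_\ell-\mathrm{sign}(\delta)\delta',\kappa^*_{\ell+1},\dots,\kappa^*_m)$, the equation $q(\kappa;x_1)=0$ has a simple real solution $x_1^{(2)}$ with $-\epsilon<x_1^{(2)}-x_1^*<0$.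
   Context: A reaction network $G$ has species $X_1,\dots,X_s$ and $m$ reactions $\sum_{i}\alpha_{ij}X_i\to\sum_i\beta_{ij}X_i$, $\alpha_{ij},\beta_{ij}\in\mathbb Z_{\ge0}$, $(\alpha_{1j},\dots,\alpha_{sj})\neq(\beta_{1j},\dots,\beta_{sj})$; its stoichiometric subspace is the span of the vectors $(\beta_{ij}-\alpha_{ij})_i$. Since it is one-dimensional, species are labelled so that $\beta_{11}-\alpha_{11}\ne0$, and there are $\lambda_j\ne0$ ($\lambda_1=1$) with $\beta_{ij}-\alpha_{ij}=\lambda_j(\beta_{i1}-\alpha_{i1})$. For a univariate polynomial $p$, $z^*$ is simple if $p(z^* )=0\neq p'(z^* )$, and a multiplicity-$N$ solution ($N\ge2$) if $p(z^* )=\dots=p^{(N-1)}(z^* )=0\ne p^{(N)}(z^* )$. Notation for $c^*\in\mathbb R^{s-1}$: $A_1=1,B_1=0$, $A_i=\frac{\beta_{i1}-\alpha_{i1}}{\beta_{11}-\alpha_{11}}$, $B_i=-\frac{c^*_{i-1}}{\beta_{11}-\alpha_{11}}$ ($i\ge2$). $[i]=\{k:A_k\ne0,B_k/A_k=B_i/A_i\}$ if $A_i\ne0$, $[i]=\{k:A_k=0\}$ otherwise; species labelled so that $1,\dots,r$ represent the $r$ distinct classes. $\varphi_k=\min_j\sum_{i\in[k]}\alpha_{ij}$, $\gamma_{kj}=\sum_{i\in[k]}\alpha_{ij}-\varphi_k$. $\mathcal J=\{i:A_i\ne0\}$, $\mathcal H=\{k\in\{1,\dots,r\}\cap\mathcal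 J:\gamma_{k1},\dots,\gamma_{km}\text{ not all equal}\}$ (with the standing labelling $1\in\mathcal H$ whenever $G$ has finitely many but at least one positive steady state in the class of $c^*$ for some rate constants). $I_i=(-B_i/A_i,+\infty)$ if $A_i>0$, $(0,+\infty)$ if $A_i=0$, $(0,-B_i/A_i)$ if $A_i<0$; $I=\bigcap_{k\in\mathcal H}I_k$; $\tau\in\mathcal H$ has $A_\tau>0$ and $-B_\tau/A_\tau$ equal to the left endpoint of $I$. $Y_i(x_1)=(A_ix_1+B_i)/|A_i|$ if $i\in\mathcal J$, $1$ otherwise; $\mathcal C_j=\prod_{i\in\mathcal J}|A_i|^{\alpha_{ij}}\prod_{i\notin\mathcal J}B_i^{\alpha_{ij}}$; $P_j(x_1)=\mathcal C_j\prod_{k\in\mathcal H}Y_k(x_1)^{\gamma_{kj}}$; $q(\kappa;x_1)=(\beta_{11}-\alpha_{11})\sum_{j=1}^m\lambda_j\kappa_jP_j(x_1)$; $\ell$ is an index $j$ minimizing $\gamma_{\tau j}$; $\hat\kappa=(\kappa_j)_{j\ne\ell}$, $\phi(\hat\kappa;x_1)=-\frac{\sum_{j\ne\ell}\lambda_j\kappa_jP_j(x_1)}{\lambda_\ell P_\ell(x_1)}$, well-defined at $z$ if $P_\ell(z)\ne0$. *)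

theory Defs
  imports "HOL-Computational_Algebra.Polynomial"
begin

text \<open>Reaction network data: species 1..s, reactions 1..m,
  reactant coefficients alpha i j, product coefficients beta i j (indices 1-based).
  c is the total-constant vector c* (entries c 1, ..., c (s-1)).\<close>

definition dstoich :: "(nat \<Rightarrow> nat \<Rightarrow> nat) \<Rightarrow> (nat \<Rightarrow> nat \<Rightarrow> nat) \<Rightarrow> nat \<Rightarrow> nat \<Rightarrow> real" where
  "dstoich \<alpha> \<beta> i j = real (\<beta> i j) - real (\<alpha> i j)"

definition Acoef :: "(nat \<Rightarrow> nat \<Rightarrow> nat) \<Rightarrow> (nat \<Rightarrow> nat \<Rightarrow> nat) \<Rightarrow> nat \<Rightarrow> real" where
  "Acoef \<alpha> \<beta> i = (if i = 1 then 1 else dstoich \<alpha> \<beta> i 1 / dstoich \<alpha> \<beta> 1 1)"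

definition Bcoef :: "(nat \<Rightarrow> nat \<Rightarrow> nat) \<Rightarrow> (nat \<Rightarrow> nat \<Rightarrow> nat) \<Rightarrow> (nat \<Rightarrow> real) \<Rightarrow> nat \<Rightarrow> real" where
  "Bcoef \<alpha> \<beta> c i = (if i = 1 then 0 else - c (i - 1) / dstoich \<alpha> \<beta> 1 1)"

definition cls :: "nat \<Rightarrow> (nat \<Rightarrow> nat \<Rightarrow> nat) \<Rightarrow> (nat \<Rightarrow> nat \<Rightarrow> nat) \<Rightarrow> (nat \<Rightarrow> real) \<Rightarrow> nat \<Rightarrow> nat set" where
  "cls s \<alpha> \<beta> c i =
     (if Acoef \<alpha> \<beta> i \<noteq> 0
      then {k \<in> {1..s}. Acoef \<alpha> \<beta> k \<noteq> 0 \<and>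
                Bcoef \<alpha> \<beta> c k / Acoef \<alpha> \<beta> k = Bcoef \<alpha> \<beta> c i / Acoef \<alpha> \<beta> i}
      else {k \<in> {1..s}. Acoef \<alpha> \<beta> k = 0})"

definition phiexp :: "nat \<Rightarrow> nat \<Rightarrow> (nat \<Rightarrow> nat \<Rightarrow> nat) \<Rightarrow> (nat \<Rightarrow> nat \<Rightarrow> nat) \<Rightarrow> (nat \<Rightarrow> real) \<Rightarrow> nat \<Rightarrow> nat" where
  "phiexp s m \<alpha> \<beta> c k = Min ((\<lambda>j. \<Sum>i\<in>cls s \<alpha> \<beta> c k. \<alpha> i j) ` {1..m})"

definition gam :: "nat \<Rightarrow> nat \<Rightarrow> (nat \<Rightarrow> nat \<Rightarrow> nat) \<Rightarrow> (nat \<Rightarrow> nat \<Rightarrow> nat) \<Rightarrow> (nat \<Rightarrow> real) \<Rightarrow> nat \<Rightarrow> nat \<Rightarrow> nat" where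
  "gam s m \<alpha> \<beta> c k j = (\<Sum>i\<in>cls s \<alpha> \<beta> c k. \<alpha> i j) - phiexp s m \<alpha> \<beta> c k"

definition Jset :: "nat \<Rightarrow> (nat \<Rightarrow> nat \<Rightarrow> nat) \<Rightarrow> (nat \<Rightarrow> nat \<Rightarrow> nat) \<Rightarrow> nat set" where
  "Jset s \<alpha> \<beta> = {i \<in> {1..s}. Acoef \<alpha> \<beta> i \<noteq> 0}"

definition Hset :: "nat \<Rightarrow> nat \<Rightarrow> nat \<Rightarrow> (nat \<Rightarrow> nat \<Rightarrow> nat) \<Rightarrow> (nat \<Rightarrow> nat \<Rightarrow> nat) \<Rightarrow> (nat \<Rightarrow> real) \<Rightarrow> nat set" where
  "Hset r s m \<alpha> \<beta> c = {k \<in> {1..r} \<inter> Jset s \<alpha> \<beta>.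
      \<not> (\<forall>j\<in>{1..m}. \<forall>j'\<in>{1..m}. gam s m \<alpha> \<beta> c k j = gam s m \<alpha> \<beta> c k j')}"

definition Iint :: "(nat \<Rightarrow> nat \<Rightarrow> nat) \<Rightarrow> (nat \<Rightarrow> nat \<Rightarrow> nat) \<Rightarrow> (nat \<Rightarrow> real) \<Rightarrow> nat \<Rightarrow> real set" where
  "Iint \<alpha> \<beta> c i =
     (if Acoef \<alpha> \<beta> i > 0 then {- Bcoef \<alpha> \<beta> c i / Acoef \<alpha> \<beta> i <..}
      else if Acoef \<alpha> \<beta> i = 0 then {0<..}
      else {0 <..< - Bcoef \<alpha> \<beta> c i / Acoef \<alpha> \<beta> i})"

definition Iall :: "nat \<Rightarrow> nat \<Rightarrow> nat \<Rightarrow> (nat \<Rightarrow> nat \<Rightarrow> nat) \<Rightarrow> (nat \<Rightarrow> nat \<Rightarrow> nat) \<Rightarrow> (nat \<Rightarrow> real) \<Rightarrow> real set" where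
  "Iall r s m \<alpha> \<beta> c = (\<Inter>k\<in>Hset r s m \<alpha> \<beta> c. Iint \<alpha> \<beta> c k)"

definition Ypoly :: "nat \<Rightarrow> (nat \<Rightarrow> nat \<Rightarrow> nat) \<Rightarrow> (nat \<Rightarrow> nat \<Rightarrow> nat) \<Rightarrow> (nat \<Rightarrow> real) \<Rightarrow> nat \<Rightarrow> real poly" where
  "Ypoly s \<alpha> \<beta> c i =
     (if i \<in> Jset s \<alpha> \<beta>
      then smult (1 / \<bar>Acoef \<alpha> \<beta> i\<bar>) [:Bcoef \<alpha> \<beta> c i, Acoef \<alpha> \<beta> i:]
      else 1)"

definition Ccoef :: "nat \<Rightarrow> (nat \<Rightarrow> nat \<Rightarrow> nat) \<Rightarrow> (nat \<Rightarrow> nat \<Rightarrow> nat) \<Rightarrow> (nat \<Rightarrow> real) \<Rightarrow> nat \<Rightarrow> real" where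
  "Ccoef s \<alpha> \<beta> c j =
     (\<Prod>i\<in>Jset s \<alpha> \<beta>. \<bar>Acoef \<alpha> \<beta> i\<bar> ^ \<alpha> i j) *
     (\<Prod>i\<in>{1..s} - Jset s \<alpha> \<beta>. Bcoef \<alpha> \<beta> c i ^ \<alpha> i j)"

definition Ppoly :: "nat \<Rightarrow> nat \<Rightarrow> nat \<Rightarrow> (nat \<Rightarrow> nat \<Rightarrow> nat) \<Rightarrow> (nat \<Rightarrow> nat \<Rightarrow> nat) \<Rightarrow> (nat \<Rightarrow> real) \<Rightarrow> nat \<Rightarrow> real poly" where
  "Ppoly r s m \<alpha> \<beta> c j =
     smult (Ccoef s \<alpha> \<beta> c j)
       (\<Prod>k\<in>Hset r s m \<alpha> \<beta> c. Ypoly s \<alpha> \<beta> c k ^ gam s m \<alpha> \<beta> c k j)"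

definition qpoly :: "nat \<Rightarrow> nat \<Rightarrow> nat \<Rightarrow> (nat \<Rightarrow> nat \<Rightarrow> nat) \<Rightarrow> (nat \<Rightarrow> nat \<Rightarrow> nat) \<Rightarrow> (nat \<Rightarrow> real) \<Rightarrow> (nat \<Rightarrow> real) \<Rightarrow> (nat \<Rightarrow> real) \<Rightarrow> real poly" where
  "qpoly r s m \<alpha> \<beta> c lam \<kappa> =
     smult (dstoich \<alpha> \<beta> 1 1) (\<Sum>j\<in>{1..m}. smult (lam j * \<kappa> j) (Ppoly r s m \<alpha> \<beta> c j))"

definition simple_sol :: "real poly \<Rightarrow> real \<Rightarrow> bool" where
  "simple_sol p z \<longleftrightarrow> poly p z = 0 \<and> poly (pderiv p) z \<noteq> 0"

definition mult_sol :: "nat \<Rightarrow> real poly \<Rightarrow> real \<Rightarrow> bool" where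
  "mult_sol N p z \<longleftrightarrow> 2 \<le> N \<and> (\<forall>k<N. poly ((pderiv ^^ k) p) z = 0) \<and> poly ((pderiv ^^ N) p) z \<noteq> 0"

end

theory Submission
  imports Defs "HOL-Analysis.Analysis"
begin

lemma order_from_derivs:
  fixes p :: "real poly"
  shows "(\<forall>k<n. poly ((pderiv ^^ k) p) x = 0) \<Longrightarrow> poly ((pderiv ^^ n) p) x \<noteq> 0
    \<Longrightarrow> p \<noteq> 0 \<and> order x p = n"
proof (induction n arbitrary: p)
  case 0
  then show ?case by (auto simp: order_root)
next
  case (Suc n)
  have h1: "\<forall>k<n. poly ((pderiv ^^ k) (pderiv p)) x = 0"
    using Suc.prems(1) by (metis Suc_mono funpow_Suc_right o_apply)
  have h2: "poly ((pderiv ^^ n) (pderiv p)) x \<noteq> 0"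
    using Suc.prems(2) by (metis funpow_Suc_right o_apply)
  from Suc.IH[OF h1 h2] have ih: "pderiv p \<noteq> 0" "order x (pderiv p) = n" by auto
  have p0: "p \<noteq> 0" using ih(1) by auto
  have "poly p x = 0" using Suc.prems(1) by (metis funpow_0 zero_less_Suc)
  then show ?case using order_pderiv[OF p0] ih p0 by simp
qed

lemma ivt_strict:
  fixes f :: "real \<Rightarrow> real"
  assumes "u \<le> v" "continuous_on {u..v} f"
    and "min (f u) (f v) < t" "t < max (f u) (f v)"
  shows "\<exists>x. u < x \<and> x < v \<and> f x = t"
proof (cases "f u \<le> f v")
  case True
  then obtain x where "u \<le> x" "x \<le> v" "f x = t"
    using IVT'[of f u t v] assms by auto
  then show ?thesis using assms True
    by (metis dual_order.order_iff_strict max.absorb2 min.absorb1 not_less_iff_gr_or_eq)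
next
  case False
  then obtain x where "u \<le> x" "x \<le> v" "f x = t"
    using IVT2'[of f v t u] assms by auto
  then show ?thesis using assms False
    by (metis dual_order.order_iff_strict max.absorb1 min.absorb2 nle_le not_less_iff_gr_or_eq)
qed

lemma local_simple:
  fixes Q R g :: "real poly" and xs y t :: real
  assumes n: "n = Suc k" and Q: "Q = [:-xs,1:]^n * g"
    and nz: "poly R y \<noteq> 0" "y \<noteq> xs"
      "poly (smult (of_nat n) (g*R) + [:-xs,1:]*(pderiv g * R - g * pderiv R)) y \<noteq> 0"
    and t: "- poly Q y / poly R y = t"
  shows "simple_sol (Q + smult t R) y"
proof -
  have pQ: "poly Q y = (y-xs)^n * poly g y" using Q by (simp add: poly_power)
  have pQ': "poly (pderiv Q) y = of_nat n * (y-xs)^k * poly g y + (y-xs)^n * poly (pderiv g) y"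
  proof -
    have "pderiv Q = [:-xs,1:]^n * pderiv g + g * smult (of_nat n) ([:-xs,1:]^k)"
    proof -
      have "pderiv ([:-xs,1:]^n) = smult (of_nat n) ([:-xs,1:]^k)"
        by (simp add: pderiv_power pderiv_pCons n del: power_Suc)
      then show ?thesis unfolding Q by (simp add: pderiv_mult)
    qed
    then show ?thesis by (simp add: poly_power algebra_simps)
  qed
  have z: "poly Q y + t * poly R y = 0" using t nz(1) by (auto simp: field_simps)
  have tq: "t * poly R y = - poly Q y" using t nz(1) by (auto simp: field_simps)
  have "(poly (pderiv Q) y + t * poly (pderiv R) y) * poly R y
      = poly (pderiv Q) y * poly R y + (t * poly R y) * poly (pderiv R) y"
    by (simp add: algebra_simps)
  also have "\<dots> = poly (pderiv Q) y * poly R y - poly Q y * poly (pderiv R) y"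
    by (simp only: tq)
  also have "\<dots> = (y-xs)^k * poly (smult (of_nat n) (g*R) + [:-xs,1:]*(pderiv g * R - g * pderiv R)) y"
    unfolding pQ pQ' using n by (simp add: algebra_simps)
  also have "\<dots> \<noteq> 0" using nz by simp
  finally have "poly (pderiv Q) y + t * poly (pderiv R) y \<noteq> 0" by auto
  then show ?thesis using z unfolding simple_sol_def by (simp add: pderiv_add pderiv_smult)
qed

lemma core:
  fixes Q R g :: "real poly" and xs :: real
  assumes n: "odd n" and Q: "Q = [:-xs,1:]^n * g" and g0: "poly g xs \<noteq> 0"
    and R0: "poly R xs \<noteq> 0"
  shows "\<forall>\<epsilon>>0. \<exists>\<delta>::real. \<delta> \<noteq> 0 \<and> (\<forall>\<delta>'. 0 < \<delta>' \<and> \<delta>' < \<bar>\<delta>\<bar> \<longrightarrow>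
           (\<exists>x1. simple_sol (Q + smult (sgn \<delta> * \<delta>') R) x1 \<and> 0 < x1 - xs \<and> x1 - xs < \<epsilon>) \<and>
           (\<exists>x2. simple_sol (Q + smult (- (sgn \<delta> * \<delta>')) R) x2 \<and> - \<epsilon> < x2 - xs \<and> x2 - xs < 0))"
proof (intro allI impI)
  fix \<epsilon> :: real assume ep: "\<epsilon> > 0"
  obtain k where nk: "n = Suc k" using n by (cases n) auto
  define V where "V = smult (of_nat n) (g*R) + [:-xs,1:]*(pderiv g * R - g * pderiv R)"
  have "poly (g*R*V) xs \<noteq> 0" using g0 R0 nk by (simp add: V_def)
  then obtain \<eta> where eta: "\<eta> > 0" "\<forall>y. dist xs y < \<eta> \<longrightarrow> poly (g*R*V) y \<noteq> 0"
    using continuous_at_avoid[of xs "poly (g*R*V)" 0] by (auto simp: poly_isCont)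
  define e where "e = min \<eta> \<epsilon> / 2"
  have e: "0 < e" "e < \<eta>" "e < \<epsilon>" using eta ep by (auto simp: e_def)
  define a where "a = xs + e"
  define b where "b = xs - e"
  have nz: "poly g y \<noteq> 0 \<and> poly R y \<noteq> 0 \<and> poly V y \<noteq> 0" if "y \<in> {b..a}" for y
  proof -
    have "dist xs y < \<eta>" using that e by (auto simp: a_def b_def dist_real_def)
    then show ?thesis using eta(2) by auto
  qed
  define \<phi> where "\<phi> = (\<lambda>y. - poly Q y / poly R y)"
  define h where "h = (\<lambda>y. poly g y / poly R y)"
  have pQ: "poly Q y = (y-xs)^n * poly g y" for y using Q by (simp add: poly_power)
  have hc: "continuous_on {b..a} h" unfolding h_def using nz by (intro continuous_intros) auto
  have hnz: "h y \<noteq> 0" if "y \<in> {b..a}" for y using nz[OF that] by (simp add: h_def)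
  have ba: "b \<le> a" using e by (simp add: a_def b_def)
  have hab: "h a * h b > 0"
  proof (rule ccontr)
    assume "\<not> h a * h b > 0"
    then have "h a * h b < 0" using hnz[of a] hnz[of b] ba
      by (metis atLeastAtMost_iff dual_order.refl linorder_neqE_linordered_idom mult_eq_0_iff)
    then have "min (h b) (h a) < 0" "0 < max (h b) (h a)"
      by (auto simp: mult_less_0_iff)
    then obtain x where "b < x" "x < a" "h x = 0" using ivt_strict[OF ba hc] by blast
    then show False using hnz[of x] by auto
  qed
  have pa: "\<phi> a = - (e^n) * h a" unfolding \<phi>_def h_def pQ a_def by simp
  have pb: "\<phi> b = (e^n) * h b" unfolding \<phi>_def h_def pQ b_def using n by (simp add: power_minus_odd)
  have en: "e^n > 0" using e by simp
  have pab: "\<phi> a * \<phi> b < 0" unfolding pa pb using hab en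
    by (metis mult.assoc mult.left_commute mult_minus_left neg_less_0_iff_less zero_less_mult_iff)
  have p0: "\<phi> xs = 0" unfolding \<phi>_def pQ using nk by simp
  have phic: "continuous_on {b..a} \<phi>" unfolding \<phi>_def using nz by (intro continuous_intros) auto
  define \<delta> where "\<delta> = sgn (\<phi> a) * min \<bar>\<phi> a\<bar> \<bar>\<phi> b\<bar>"
  have fa0: "\<phi> a \<noteq> 0" "\<phi> b \<noteq> 0" using pab by auto
  have sd: "sgn \<delta> = sgn (\<phi> a)" "\<bar>\<delta>\<bar> = min \<bar>\<phi> a\<bar> \<bar>\<phi> b\<bar>" using fa0
    by (auto simp: \<delta>_def sgn_mult abs_mult sgn_if)
  have simp_at: "simple_sol (Q + smult t R) y" if "y \<in> {b..a}" "y \<noteq> xs" "\<phi> y = t" for y t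
    using local_simple[OF nk Q] nz[OF that(1)] that unfolding V_def \<phi>_def by blast
  show "\<exists>\<delta>::real. \<delta> \<noteq> 0 \<and> (\<forall>\<delta>'. 0 < \<delta>' \<and> \<delta>' < \<bar>\<delta>\<bar> \<longrightarrow>
           (\<exists>x1. simple_sol (Q + smult (sgn \<delta> * \<delta>') R) x1 \<and> 0 < x1 - xs \<and> x1 - xs < \<epsilon>) \<and>
           (\<exists>x2. simple_sol (Q + smult (- (sgn \<delta> * \<delta>')) R) x2 \<and> - \<epsilon> < x2 - xs \<and> x2 - xs < 0))"
  proof (rule exI[of _ \<delta>], intro conjI allI impI)
    show "\<delta> \<noteq> 0" using fa0 sd by auto
    fix d assume d: "0 < d \<and> d < \<bar>\<delta>\<bar>"
    let ?t = "sgn \<delta> * d"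
    have c1: "continuous_on {xs..a} \<phi>" by (rule continuous_on_subset[OF phic]) (use e in \<open>auto simp: a_def b_def\<close>)
    have c2: "continuous_on {b..xs} \<phi>" by (rule continuous_on_subset[OF phic]) (use e in \<open>auto simp: a_def b_def\<close>)
    have r1: "min (\<phi> xs) (\<phi> a) < ?t \<and> ?t < max (\<phi> xs) (\<phi> a)"
      using d sd fa0 p0 by (auto simp: sgn_if split: if_splits)
    have r2: "min (\<phi> b) (\<phi> xs) < - ?t \<and> - ?t < max (\<phi> b) (\<phi> xs)"
      using d sd fa0 p0 pab by (auto simp: sgn_if mult_less_0_iff split: if_splits)
    obtain x1 where x1: "xs < x1" "x1 < a" "\<phi> x1 = ?t"
      using ivt_strict[OF _ c1] r1 e by (auto simp: a_def)
    obtain x2 where x2: "b < x2" "x2 < xs" "\<phi> x2 = - ?t"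
      using ivt_strict[OF _ c2] r2 e by (auto simp: b_def)
    show "\<exists>x1. simple_sol (Q + smult ?t R) x1 \<and> 0 < x1 - xs \<and> x1 - xs < \<epsilon>"
      using x1 simp_at[of x1 ?t] e by (intro exI[of _ x1]) (auto simp: a_def b_def)
    show "\<exists>x2. simple_sol (Q + smult (- ?t) R) x2 \<and> - \<epsilon> < x2 - xs \<and> x2 - xs < 0"
      using x2 simp_at[of x2 "- ?t"] e by (intro exI[of _ x2]) (auto simp: a_def b_def)
  qed
qed

lemma qpoly_upd:
  assumes "ell \<in> {1..m}"
  shows "qpoly r s m \<alpha> \<beta> c lam (\<kappa>s(ell := \<kappa>s ell + u)) =
    qpoly r s m \<alpha> \<beta> c lam \<kappa>s + smult u (smult (dstoich \<alpha> \<beta> 1 1 * lam ell) (Ppoly r s m \<alpha> \<beta> c ell))"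
proof -
  let ?P = "Ppoly r s m \<alpha> \<beta> c"
  have "(\<Sum>j\<in>{1..m}. smult (lam j * (\<kappa>s(ell := \<kappa>s ell + u)) j) (?P j))
      = (\<Sum>j\<in>{1..m}. smult (lam j * \<kappa>s j) (?P j) + (if j = ell then smult (lam ell * u) (?P ell) else 0))"
    by (rule sum.cong) (auto simp: algebra_simps smult_add_left)
  also have "\<dots> = (\<Sum>j\<in>{1..m}. smult (lam j * \<kappa>s j) (?P j)) + smult (lam ell * u) (?P ell)"
    using assms by (simp add: sum.distrib)
  finally show ?thesis unfolding qpoly_def by (simp add: smult_add_right algebra_simps)
qed

theorem lemma6p4:
  fixes s m r :: nat and \<alpha> \<beta> :: "nat \<Rightarrow> nat \<Rightarrow> nat" and lam :: "nat \<Rightarrow> real"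
    and c :: "nat \<Rightarrow> real" and \<kappa>s :: "nat \<Rightarrow> real" and xs :: real
    and \<tau> ell :: nat
  assumes s_pos: "1 \<le> s" and m_pos: "1 \<le> m"
    and reac: "\<forall>j\<in>{1..m}. \<exists>i\<in>{1..s}. \<alpha> i j \<noteq> \<beta> i j"
    and d11: "\<beta> 1 1 \<noteq> \<alpha> 1 1"
    and lam1: "lam 1 = 1"
    and lam_nz: "\<forall>j\<in>{1..m}. lam j \<noteq> 0"
    and lam: "\<forall>i\<in>{1..s}. \<forall>j\<in>{1..m}. dstoich \<alpha> \<beta> i j = lam j * dstoich \<alpha> \<beta> i 1"
    and r_range: "1 \<le> r" "r \<le> s"
    and reps_distinct: "\<forall>i\<in>{1..r}. \<forall>k\<in>{1..r}. i \<noteq> k \<longrightarrow> k \<notin> cls s \<alpha> \<beta> c i"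
    and reps_cover: "\<forall>i\<in>{1..s}. \<exists>k\<in>{1..r}. i \<in> cls s \<alpha> \<beta> c k"
    and tau: "\<tau> \<in> Hset r s m \<alpha> \<beta> c" "Acoef \<alpha> \<beta> \<tau> > 0"
      "Iall r s m \<alpha> \<beta> c \<noteq> {}"
      "- Bcoef \<alpha> \<beta> c \<tau> / Acoef \<alpha> \<beta> \<tau> = Inf (Iall r s m \<alpha> \<beta> c)"
    and hell: "ell \<in> {1..m}" "\<forall>j\<in>{1..m}. gam s m \<alpha> \<beta> c \<tau> ell \<le> gam s m \<alpha> \<beta> c \<tau> j"
    and kappa_pos: "\<forall>j\<in>{1..m}. \<kappa>s j > 0"
    and sol: "simple_sol (qpoly r s m \<alpha> \<beta> c lam \<kappa>s) xs \<or>
              (\<exists>N::nat. N > 0 \<and> mult_sol (2 * N + 1) (qpoly r s m \<alpha> \<beta> c lam \<kappa>s) xs)"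
    and welldef: "poly (Ppoly r s m \<alpha> \<beta> c ell) xs \<noteq> 0"
  shows "\<forall>\<epsilon>>0. \<exists>\<delta>::real. \<delta> \<noteq> 0 \<and> (\<forall>\<delta>'. 0 < \<delta>' \<and> \<delta>' < \<bar>\<delta>\<bar> \<longrightarrow>
           (\<exists>x1. simple_sol (qpoly r s m \<alpha> \<beta> c lam (\<kappa>s(ell := \<kappa>s ell + sgn \<delta> * \<delta>'))) x1
                 \<and> 0 < x1 - xs \<and> x1 - xs < \<epsilon>) \<and>
           (\<exists>x2. simple_sol (qpoly r s m \<alpha> \<beta> c lam (\<kappa>s(ell := \<kappa>s ell - sgn \<delta> * \<delta>'))) x2
                 \<and> - \<epsilon> < x2 - xs \<and> x2 - xs < 0))"
proof -
  let ?Q = "qpoly r s m \<alpha> \<beta> c lam \<kappa>s"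
  let ?R = "smult (dstoich \<alpha> \<beta> 1 1 * lam ell) (Ppoly r s m \<alpha> \<beta> c ell)"
  have d0: "dstoich \<alpha> \<beta> 1 1 \<noteq> 0" using d11 by (simp add: dstoich_def)
  have l0: "lam ell \<noteq> 0" using lam_nz hell(1) by blast
  have R0: "poly ?R xs \<noteq> 0" using d0 l0 welldef by simp
  obtain n where n: "odd n" "\<forall>k<n. poly ((pderiv ^^ k) ?Q) xs = 0" "poly ((pderiv ^^ n) ?Q) xs \<noteq> 0"
  proof (cases "simple_sol ?Q xs")
    case True
    then show ?thesis using that[of 1] unfolding simple_sol_def by auto
  next
    case False
    then obtain N :: nat where "N > 0" "mult_sol (2 * N + 1) ?Q xs" using sol by blast
    then show ?thesis using that[of "2*N+1"] unfolding mult_sol_def by auto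
  qed
  from order_from_derivs[OF n(2,3)] have Q0: "?Q \<noteq> 0" and ord: "order xs ?Q = n" by auto
  obtain g where g: "?Q = [:-xs,1:]^order xs ?Q * g" "\<not> [:-xs,1:] dvd g"
    using order_decomp[OF Q0] by blast
  have g0: "poly g xs \<noteq> 0" using g(2) by (simp add: poly_eq_0_iff_dvd)
  have C: "\<forall>\<epsilon>>0. \<exists>\<delta>::real. \<delta> \<noteq> 0 \<and> (\<forall>\<delta>'. 0 < \<delta>' \<and> \<delta>' < \<bar>\<delta>\<bar> \<longrightarrow>
           (\<exists>x1. simple_sol (?Q + smult (sgn \<delta> * \<delta>') ?R) x1 \<and> 0 < x1 - xs \<and> x1 - xs < \<epsilon>) \<and>
           (\<exists>x2. simple_sol (?Q + smult (- (sgn \<delta> * \<delta>')) ?R) x2 \<and> - \<epsilon> < x2 - xs \<and> x2 - xs < 0))"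
    using core[OF n(1) g(1)[unfolded ord] g0 R0] .
  have e1: "\<kappa>s(ell := \<kappa>s ell - v) = \<kappa>s(ell := \<kappa>s ell + (- v))" for v by simp
  show ?thesis using C unfolding e1 qpoly_upd[OF hell(1)] .
qed

end
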